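(* The function $U(n)=\sum_{j=1}^n\frac{1}{j^2}$ of the positive integer variable $n$ is a transcendental function in $n$ over $\overline{\mathbb{Q}}$.
   Context: $\overline{\mathbb{Q}}\subseteq\mathbb{C}$ denotes the field of algebraic numbers. A function $f(n)$ of the positive integer variable $n$ is an algebraic function over a subfield $K\subseteq\mathbb{C}$ if there exist polynomials $q_0,\dots,q_k\in K[n]$ with $q_k\neq 0$ such that $q_k(n)f(n)^k+\cdots+q_1(n)f(n)+q_0(n)=0$ for all positive integers $n$; otherwise $f$ is a transcendental function over $K$. *)

theory Defs
  imports "HOL-Computational_Algebra.Polynomial" Complex_Main
begin

definition alg_poly :: "complex poly \<Rightarrow> bool" where
  "alg_poly q \<longleftrightarrow> (\<forall>i. algebraic (coeff q i))"

definition algebraic_function_over_alg :: "(nat \<Rightarrow> complex) \<Rightarrow> bool" where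
  "algebraic_function_over_alg f \<longleftrightarrow>
     (\<exists>(k::nat) (q::nat \<Rightarrow> complex poly).
        (\<forall>i\<le>k. alg_poly (q i)) \<and> q k \<noteq> 0 \<and>
        (\<forall>n::nat. n \<ge> 1 \<longrightarrow> (\<Sum>i\<le>k. poly (q i) (of_nat n) * f n ^ i) = 0))"

definition transcendental_function_over_alg :: "(nat \<Rightarrow> complex) \<Rightarrow> bool" where
  "transcendental_function_over_alg f \<longleftrightarrow> \<not> algebraic_function_over_alg f"

end

theory Submission
  imports Defs "HOL-Computational_Algebra.Computational_Algebra" "HOL-Computational_Algebra.Field_as_Ring"
begin

definition Xp :: "complex poly" where "Xp = [:1,1:]"
lemma poly_Xp[simp]: "poly Xp x = x + 1" by (simp add: Xp_def)
lemma degree_Xp: "degree Xp = 1" by (simp add: Xp_def)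

lemma core:
  fixes a b :: "complex poly" and c :: complex
  assumes a: "a \<noteq> 0" and c: "c \<noteq> 0"
  and eq: "Xp^2 * (pcompose a Xp * b - a * pcompose b Xp) = smult c (a * pcompose a Xp)"
  shows False
proof -
  define g where "g = gcd a b"
  have g0: "g \<noteq> 0" using a by (simp add: g_def)
  obtain a' b' where a': "a = a' * g" and b': "b = b' * g" and cop: "coprime a' b'"
    using gcd_coprime_exists[of a b] g0 unfolding g_def by blast
  have a'0: "a' \<noteq> 0" using a a' by auto
  have gg: "g * pcompose g Xp \<noteq> 0" using g0 pcompose_eq_0[of g Xp] degree_Xp by auto
  have "(g * pcompose g Xp) * (Xp^2 * (pcompose a' Xp * b' - a' * pcompose b' Xp))
      = (g * pcompose g Xp) * smult c (a' * pcompose a' Xp)"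
    using eq unfolding a' b' pcompose_mult by (simp add: algebra_simps)
  then have eq': "Xp^2 * (pcompose a' Xp * b' - a' * pcompose b' Xp) = smult c (a' * pcompose a' Xp)"
    using mult_left_cancel[OF gg] by blast
  have pt: "(x+1)^2 * (poly a' (x+1) * poly b' x - poly a' x * poly b' (x+1)) = c * (poly a' x * poly a' (x+1))" for x
    using arg_cong[OF eq', of "\<lambda>p. poly p x"] by (simp add: poly_pcompose)
  have nocommon: "poly b' z \<noteq> 0" if "poly a' z = 0" for z
  proof
    assume "poly b' z = 0"
    then have "[:-z,1:] dvd a'" "[:-z,1:] dvd b'" using that by (simp_all add: poly_eq_0_iff_dvd)
    then have "is_unit [:-z,1:]" using cop by (meson coprime_common_divisor)
    then show False by (simp add: is_unit_poly_iff)
  qed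
  define R where "R = {z. poly a' z = 0}"
  have fin: "finite R" unfolding R_def using poly_roots_finite[OF a'0] .
  have "R \<noteq> {}" using pt[of "-1"] c unfolding R_def by auto
  have "Max (Re ` R) \<in> Re ` R" using fin \<open>R \<noteq> {}\<close> by simp
  then obtain z where z: "z \<in> R" "Re z = Max (Re ` R)" by auto
  have "Min (Re ` R) \<in> Re ` R" using fin \<open>R \<noteq> {}\<close> by simp
  then obtain w where w: "w \<in> R" "Re w = Min (Re ` R)" by auto
  have "z + 1 \<notin> R"
  proof
    assume "z + 1 \<in> R" then have "Re (z+1) \<le> Max (Re ` R)" using fin by (intro Max_ge finite_imageI imageI)
    then show False using z by simp
  qed
  then have "z + 1 = 0" using pt[of z] z nocommon unfolding R_def by auto
  have "w - 1 \<notin> R"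
  proof
    assume "w - 1 \<in> R" then have "Re (w-1) \<ge> Min (Re ` R)" using fin by (intro Min_le finite_imageI imageI)
    then show False using w by simp
  qed
  then have "w = 0" using pt[of "w-1"] w nocommon unfolding R_def by auto
  have "Re w \<le> Re z" unfolding w(2) using z fin by (intro Min_le finite_imageI imageI)
  then show False using \<open>z+1=0\<close> \<open>w=0\<close> proof -
    have "z = -1" using \<open>z+1=0\<close> by (simp only: eq_neg_iff_add_eq_0)
    then show False using \<open>Re w \<le> Re z\<close> \<open>w=0\<close> by simp
  qed
qed

lemma swap_tri:
  fixes g :: "nat \<Rightarrow> nat \<Rightarrow> 'a::comm_monoid_add"
  shows "(\<Sum>i\<le>k. \<Sum>j\<le>i. g i j) = (\<Sum>j\<le>k. \<Sum>i=j..k. g i j)"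
proof (induction k)
  case 0 then show ?case by simp
next
  case (Suc k)
  have "(\<Sum>j\<le>Suc k. \<Sum>i=j..Suc k. g i j) = (\<Sum>j\<le>k. \<Sum>i=j..Suc k. g i j) + g (Suc k) (Suc k)"
    by simp
  also have "(\<Sum>j\<le>k. \<Sum>i=j..Suc k. g i j) = (\<Sum>j\<le>k. (\<Sum>i=j..k. g i j) + g (Suc k) j)"
    by (intro sum.cong refl) simp
  finally show ?case using Suc by (simp add: sum.distrib add_ac)
qed

lemma inf_nat_img: "infinite (of_nat ` {N..} :: complex set)"
  using finite_imageD[of "of_nat :: nat \<Rightarrow> complex" "{N..}"] inj_of_nat infinite_Ici
  by (metis inj_on_subset subset_UNIV)

lemma no_rel:
  fixes f :: "nat \<Rightarrow> complex" and q :: "nat \<Rightarrow> complex poly"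
  assumes step: "\<And>n. f (Suc n) = f n + 1 / (of_nat (Suc n))^2"
  and rel: "q k \<noteq> 0" "\<forall>n\<ge>N. (\<Sum>i\<le>k. poly (q i) (of_nat n) * f n ^ i) = 0"
  shows False
proof -
  define P where "P k \<longleftrightarrow> (\<exists>(q::nat \<Rightarrow> complex poly) N. q k \<noteq> 0 \<and> (\<forall>n\<ge>N. (\<Sum>i\<le>k. poly (q i) (of_nat n) * f n ^ i) = 0))" for k
  have "P k" using rel unfolding P_def by blast
  define k0 where "k0 = (LEAST k. P k)"
  have Pk0: "P k0" unfolding k0_def using \<open>P k\<close> by (rule LeastI)
  have mini: "\<not> P j" if "j < k0" for j using not_less_Least that unfolding k0_def by blast
  obtain q N where qk: "q k0 \<noteq> 0"
    and E: "\<And>n. n \<ge> N \<Longrightarrow> (\<Sum>i\<le>k0. poly (q i) (of_nat n) * f n ^ i) = 0"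
    using Pk0 unfolding P_def by blast
  have k0: "k0 \<noteq> 0"
  proof
    assume "k0 = 0"
    then have "poly (q 0) (of_nat n) = 0" if "n \<ge> N" for n using E[OF that] by simp
    then have "of_nat ` {N..} \<subseteq> {x. poly (q 0) x = 0}" by auto
    then show False using poly_roots_finite[of "q 0"] qk \<open>k0=0\<close> finite_subset inf_nat_img by blast
  qed
  then obtain m where km: "k0 = Suc m" by (cases k0) auto
  define q' where "q' j = pcompose (q k0) Xp * q j * Xp^(2*k0)
     - q k0 * (\<Sum>i=j..k0. smult (of_nat (i choose j)) (pcompose (q i) Xp * Xp^(2*(k0-i+j))))" for j
  have key: "(\<Sum>j\<le>k0. poly (q' j) (of_nat n) * f n ^ j) = 0" if "n \<ge> N" for n
  proof -
    define x where "x = (of_nat n :: complex)"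
    define U where "U = f n"
    define h where "h = 1 / (x+1)^2"
    have X0: "x + 1 \<noteq> 0" unfolding x_def by (metis of_nat_Suc of_nat_eq_0_iff nat.distinct(1) add.commute)
    have fS: "f (Suc n) = U + h" using step unfolding U_def h_def x_def by (simp add: add.commute)
    have E1: "(\<Sum>i\<le>k0. poly (q i) x * U^i) = 0" using E[OF that] unfolding x_def U_def .
    have E2: "(\<Sum>i\<le>k0. poly (q i) (x+1) * (U+h)^i) = 0" using E[of "Suc n"] that fS unfolding x_def by (simp add: add.commute)
    have bin: "(x+1)^(2*k0) * (U+h)^i = (\<Sum>j\<le>i. of_nat (i choose j) * U^j * (x+1)^(2*(k0-i+j)))" if "i \<le> k0" for i
    proof -
      have "(x+1)^(2*k0) * (U+h)^i = (\<Sum>j\<le>i. of_nat (i choose j) * U^j * ((x+1)^(2*k0) * h^(i-j)))"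
        unfolding binomial_ring[of U h i] by (simp add: sum_distrib_left mult_ac)
      also have "\<dots> = (\<Sum>j\<le>i. of_nat (i choose j) * U^j * (x+1)^(2*(k0-i+j)))"
      proof (rule sum.cong[OF refl])
        fix j assume "j \<in> {..i}"
        then have "2*k0 = 2*(i-j) + 2*(k0-i+j)" using that by auto
        then have "(x+1)^(2*k0) = (x+1)^(2*(i-j)) * (x+1)^(2*(k0-i+j))" by (metis power_add)
        moreover have "(x+1)^(2*(i-j)) * h^(i-j) = 1" unfolding h_def using X0
          by (simp add: power_mult power_one_over[symmetric] power_mult_distrib[symmetric] flip: power_mult)
        ultimately show "of_nat (i choose j) * U^j * ((x+1)^(2*k0) * h^(i-j)) = of_nat (i choose j) * U^j * (x+1)^(2*(k0-i+j))"
          by (simp add: mult_ac)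
      qed
      finally show ?thesis .
    qed
    have pq': "poly (q' j) x = poly (q k0) (x+1) * poly (q j) x * (x+1)^(2*k0)
       - poly (q k0) x * (\<Sum>i=j..k0. of_nat (i choose j) * (poly (q i) (x+1) * (x+1)^(2*(k0-i+j))))" for j
      unfolding q'_def by (simp add: poly_sum poly_pcompose)
    have "(\<Sum>i\<le>k0. poly (q i) (x+1) * ((x+1)^(2*k0) * (U+h)^i))
        = (\<Sum>i\<le>k0. \<Sum>j\<le>i. poly (q i) (x+1) * (of_nat (i choose j) * U^j * (x+1)^(2*(k0-i+j))))"
      by (intro sum.cong refl) (simp add: bin sum_distrib_left)
    also have "\<dots> = (\<Sum>j\<le>k0. \<Sum>i=j..k0. poly (q i) (x+1) * (of_nat (i choose j) * U^j * (x+1)^(2*(k0-i+j))))"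
      by (rule swap_tri)
    also have "\<dots> = (\<Sum>j\<le>k0. (\<Sum>i=j..k0. of_nat (i choose j) * (poly (q i) (x+1) * (x+1)^(2*(k0-i+j)))) * U^j)"
      by (intro sum.cong refl) (simp add: sum_distrib_left sum_distrib_right mult_ac)
    finally have S2': "(\<Sum>i\<le>k0. poly (q i) (x+1) * ((x+1)^(2*k0) * (U+h)^i)) = (\<Sum>j\<le>k0. (\<Sum>i=j..k0. of_nat (i choose j) * (poly (q i) (x+1) * (x+1)^(2*(k0-i+j)))) * U^j)" .
    have Z: "(\<Sum>i\<le>k0. poly (q i) (x+1) * ((x+1)^(2*k0) * (U+h)^i)) = (x+1)^(2*k0) * (\<Sum>i\<le>k0. poly (q i) (x+1) * (U+h)^i)"
      by (simp add: sum_distrib_left mult_ac)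
    have S2: "(\<Sum>j\<le>k0. (\<Sum>i=j..k0. of_nat (i choose j) * (poly (q i) (x+1) * (x+1)^(2*(k0-i+j)))) * U^j) = 0"
      using S2' Z E2 by simp
    have "(\<Sum>j\<le>k0. poly (q' j) x * U ^ j)
       = poly (q k0) (x+1) * (x+1)^(2*k0) * (\<Sum>i\<le>k0. poly (q i) x * U^i)
         - poly (q k0) x * (\<Sum>j\<le>k0. (\<Sum>i=j..k0. of_nat (i choose j) * (poly (q i) (x+1) * (x+1)^(2*(k0-i+j)))) * U^j)"
      by (simp add: pq' left_diff_distrib right_diff_distrib sum_subtractf sum_distrib_left sum_distrib_right mult_ac)
    also have "\<dots> = 0" using E1 S2 by simp
    finally show ?thesis unfolding x_def U_def .
  qed
  have q'k: "q' k0 = 0" unfolding q'_def by simp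
  have key2: "(\<Sum>j\<le>m. poly (q' j) (of_nat n) * f n ^ j) = 0" if "n\<ge>N" for n
    using key[OF that] q'k km by simp
  have q'm: "q' m = 0"
  proof (rule ccontr)
    assume "q' m \<noteq> 0"
    then have "P m" unfolding P_def using key2 by blast
    then show False using mini km by simp
  qed
  have "q' m = Xp^(2*m) * (Xp^2 * (pcompose (q k0) Xp * q m - q k0 * pcompose (q m) Xp)
          - smult (of_nat (Suc m)) (q k0 * pcompose (q k0) Xp))"
    unfolding q'_def km by (simp add: algebra_simps power_add power_mult) (simp add: power2_eq_square algebra_simps)
  then have "Xp^2 * (pcompose (q k0) Xp * q m - q k0 * pcompose (q m) Xp)
          = smult (of_nat (Suc m)) (q k0 * pcompose (q k0) Xp)"
    using q'm by (simp add: Xp_def)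
  then show False using core[OF qk] by (metis of_nat_eq_0_iff nat.distinct(1))
qed

theorem mainTheorem12:
  shows "transcendental_function_over_alg
           (\<lambda>n. complex_of_real (\<Sum>j=1..n. 1 / (real j)^2))"
proof -
  define f where "f = (\<lambda>n. complex_of_real (\<Sum>j=1..n. 1 / (real j)^2))"
  have step: "f (Suc n) = f n + 1 / (of_nat (Suc n))^2" for n
    unfolding f_def by (simp add: of_real_add)
  show ?thesis
    unfolding transcendental_function_over_alg_def algebraic_function_over_alg_def f_def[symmetric]
  proof
    assume "\<exists>(k::nat) (q::nat \<Rightarrow> complex poly). (\<forall>i\<le>k. alg_poly (q i)) \<and> q k \<noteq> 0 \<and>
        (\<forall>n::nat. n \<ge> 1 \<longrightarrow> (\<Sum>i\<le>k. poly (q i) (of_nat n) * f n ^ i) = 0)"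
    then obtain k q where "q k \<noteq> 0" "\<forall>n\<ge>1. (\<Sum>i\<le>k. poly (q i) (of_nat n) * f n ^ i) = 0"
      by blast
    then show False using no_rel[OF step] by blast
  qed
qed

end
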